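(* Let $n\ge 1$ be a number of qubits, let $\rho_0$ be an $n$-qubit input state, let $O$ be a Hermitian observable, and let $U(\theta)=\prod_{j=1}^{m}\exp(-i\theta_j H_j)$ be a parameterized unitary with Hermitian generators $H_j$ and parameters $\theta\in\mathbb{R}^m$. Define the cost $C_{\mathrm{uni}}(\theta)=\operatorname{Tr}[O\,U(\theta)\rho_0U(\theta)^\dagger]$, its infimum $C^*_{\mathrm{uni}}=\inf_\theta C_{\mathrm{uni}}(\theta)$, and consider gradient descent $\theta_{t+1}=\theta_t-\eta\nabla C_{\mathrm{uni}}(\theta_t)$ started from a random initialization $\theta_0$, with optimality gaps $\Delta_t=C_{\mathrm{uni}}(\theta_t)-C^*_{\mathrm{uni}}$. Assume: (i) (smoothness) $\|\nabla C_{\mathrm{uni}}(\theta)-\nabla C_{\mathrm{uni}}(\phi)\|_2\le\beta\|\theta-\phi\|_2$ for all $\theta,\phi$, equivalently $\|\nabla^2 C_{\mathrm{uni}}(\theta)\|_2\le\beta$ for all $\theta$, and $0<\eta\le 1/\beta$; (ii) (trajectory-uniform flatness) there are constants $B>0$ and $b>1$ such that $\mathbb{E}\big[\|\nabla C_{\mathrm{uni}}(\theta_t)\|_2^2\big]\le G(n):=m\,B\,b^{-n}$ for all $t\ge 0$ until the expected gap reaches a target $\varepsilon$ (i.e. for every $t$ such that $\mathbb{E}[\Delta_s]>\varepsilon$ for all $s\le t$). Suppose $\mathbb{E}[\Delta_0]\ge\delta_0>0$. If $\mathbb{E}[\Delta_T]\le\varepsilon<\delta_0$, then $$T\ \ge\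 \frac{2(\delta_0-\varepsilon)}{3\eta\,G(n)}=\Omega\!\left(\frac{b^n}{\eta\, m}\right).$$
   Context: Expectations are taken over the random initialization $\theta_0$ (gradient descent is deterministic thereafter). $\|\cdot\|_2$ denotes the Euclidean norm for vectors and the spectral norm for the Hessian. The $\Omega(\cdot)$ is asymptotic in the number of qubits $n$, with $\delta_0,\varepsilon,B,b$ fixed. *)

theory Defs
  imports "HOL-Analysis.Analysis" "HOL-Probability.Probability"
begin

type_synonym 'q cmat = "complex^'q^'q"

definition cadj :: "'q::finite cmat \<Rightarrow> 'q cmat" where
  "cadj A = (\<chi> i j. cnj (A $ j $ i))"

definition ctrace :: "'q::finite cmat \<Rightarrow> complex" where
  "ctrace A = (\<Sum>i\<in>UNIV. A $ i $ i)"

definition chermitian :: "'q::finite cmat \<Rightarrow> bool" where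
  "chermitian A \<longleftrightarrow> cadj A = A"

definition cpsd :: "'q::finite cmat \<Rightarrow> bool" where
  "cpsd A \<longleftrightarrow> (\<forall>v::complex^'q.
      Im (\<Sum>i\<in>UNIV. cnj (v $ i) * (A *v v) $ i) = 0 \<and>
      0 \<le> Re (\<Sum>i\<in>UNIV. cnj (v $ i) * (A *v v) $ i))"

definition density :: "'q::finite cmat \<Rightarrow> bool" where
  "density \<rho> \<longleftrightarrow> chermitian \<rho> \<and> cpsd \<rho> \<and> ctrace \<rho> = 1"

definition cscale :: "complex \<Rightarrow> 'q::finite cmat \<Rightarrow> 'q cmat" where
  "cscale c A = (\<chi> i j. c * A $ i $ j)"

fun cmat_pow :: "'q::finite cmat \<Rightarrow> nat \<Rightarrow> 'q cmat" where
  "cmat_pow A 0 = mat 1"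
| "cmat_pow A (Suc k) = A ** cmat_pow A k"

definition mexp :: "'q::finite cmat \<Rightarrow> 'q cmat" where
  "mexp A = (\<chi> i j. (\<Sum>k. cmat_pow A k $ i $ j / of_nat (fact k)))"

text \<open>U(theta) = exp(-i theta_1 H_1) exp(-i theta_2 H_2) ... exp(-i theta_m H_m),
  the parameter index type 'm being linearly ordered (j_1 < ... < j_m).\<close>
definition U_circ :: "('m::{finite,linorder} \<Rightarrow> 'q::finite cmat) \<Rightarrow> (real, 'm) vec \<Rightarrow> 'q cmat" where
  "U_circ H \<theta> = foldr (\<lambda>j A. mexp (cscale (- \<i> * complex_of_real (\<theta> $ j)) (H j)) ** A)
                       (sorted_list_of_set (UNIV :: 'm set)) (mat 1)"

text \<open>C_uni(theta) = Tr[O U(theta) rho0 U(theta)^dagger] (real for Hermitian O).\<close>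
definition C_uni :: "'q::finite cmat \<Rightarrow> 'q cmat \<Rightarrow> ('m::{finite,linorder} \<Rightarrow> 'q cmat)
                     \<Rightarrow> (real, 'm) vec \<Rightarrow> real" where
  "C_uni \<rho>0 Obs H \<theta> = Re (ctrace (Obs ** U_circ H \<theta> ** \<rho>0 ** cadj (U_circ H \<theta>)))"

definition grad :: "(real^'m \<Rightarrow> real) \<Rightarrow> real^'m \<Rightarrow> real^'m" where
  "grad f x = (THE g. (f has_derivative (\<lambda>h. g \<bullet> h)) (at x))"

definition gd_iter :: "(real^'m \<Rightarrow> real) \<Rightarrow> real \<Rightarrow> real^'m \<Rightarrow> nat \<Rightarrow> real^'m" where
  "gd_iter f \<eta> \<theta>0 t = ((\<lambda>\<theta>. \<theta> - \<eta> *\<^sub>R grad f \<theta>) ^^ t) \<theta>0"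

end

theory Submission
  imports Defs
begin




lemma mm_entry: "((A::'a::semiring_1^'n^'m) ** (B::'a^'p^'n)) $ i $ j = (\<Sum>k\<in>UNIV. A$i$k * B$k$j)"
  by (simp add: matrix_matrix_mult_def)

definition l1 :: "'q::finite cmat \<Rightarrow> real" where
  "l1 A = (\<Sum>i\<in>UNIV. \<Sum>j\<in>UNIV. norm (A$i$j))"

lemma l1_nonneg: "0 \<le> l1 A" unfolding l1_def by (intro sum_nonneg) auto

lemma row_le_l1: "(\<Sum>j\<in>UNIV. norm (A$i$j)) \<le> l1 A"
  unfolding l1_def by (rule member_le_sum) (auto intro: sum_nonneg)

lemma entry_le_l1: "norm (A$i$j) \<le> l1 A"
  by (rule order_trans[OF _ row_le_l1]) (rule member_le_sum, auto)

lemma l1_mult: "l1 (A ** B) \<le> l1 A * l1 B"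
proof -
  have "l1 (A ** B) = (\<Sum>i\<in>UNIV. \<Sum>j\<in>UNIV. norm (\<Sum>k\<in>UNIV. A$i$k * B$k$j))"
    unfolding l1_def mm_entry ..
  also have "\<dots> \<le> (\<Sum>i\<in>UNIV. \<Sum>j\<in>UNIV. \<Sum>k\<in>UNIV. norm (A$i$k) * norm (B$k$j))"
    by (intro sum_mono) (rule order_trans[OF norm_sum], simp add: norm_mult)
  also have "\<dots> = (\<Sum>i\<in>UNIV. \<Sum>k\<in>UNIV. norm (A$i$k) * (\<Sum>j\<in>UNIV. norm (B$k$j)))"
    by (rule sum.cong[OF refl]) (subst sum.swap, simp add: sum_distrib_left)
  also have "\<dots> \<le> (\<Sum>i\<in>UNIV. \<Sum>k\<in>UNIV. norm (A$i$k) * l1 B)"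
    by (intro sum_mono mult_left_mono row_le_l1) auto
  also have "\<dots> = l1 A * l1 B" unfolding l1_def by (simp only: sum_distrib_right)
  finally show ?thesis .
qed

lemma pow_bound: fixes A :: "'q::finite cmat" shows "l1 (cmat_pow A k) \<le> l1 (mat 1 :: 'q::finite cmat) * l1 A ^ k"
proof (induction k)
  case 0 then show ?case by simp
next
  case (Suc k)
  have "l1 (cmat_pow A (Suc k)) \<le> l1 A * l1 (cmat_pow A k)" using l1_mult by simp
  also have "\<dots> \<le> l1 A * (l1 (mat 1 :: 'q cmat) * l1 A ^ k)"
    by (intro mult_left_mono Suc l1_nonneg)
  finally show ?case by (simp add: algebra_simps)
qed

lemma summable_entry: fixes A :: "'q::finite cmat" shows
  "summable (\<lambda>k. norm (cmat_pow A k $ i $ j / of_nat (fact k)))"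
proof (rule summable_comparison_test[where g="\<lambda>k. l1 (mat 1 :: 'q::finite cmat) * (inverse (fact k) * l1 A ^ k)"])
  show "summable (\<lambda>k. l1 (mat 1 :: 'q::finite cmat) * (inverse (fact k) * l1 A ^ k))"
    by (intro summable_mult summable_exp)
  show "\<exists>N. \<forall>n\<ge>N. norm (norm (cmat_pow A n $ i $ j / of_nat (fact n))) \<le> l1 (mat 1 :: 'q::finite cmat) * (inverse (fact n) * l1 A ^ n)"
  proof (intro exI allI impI)
    fix n :: nat
    have "norm (cmat_pow A n $ i $ j) \<le> l1 (mat 1 :: 'q::finite cmat) * l1 A ^ n"
      using entry_le_l1 pow_bound order_trans by blast
    then show "norm (norm (cmat_pow A n $ i $ j / of_nat (fact n))) \<le> l1 (mat 1 :: 'q::finite cmat) * (inverse (fact n) * l1 A ^ n)"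
      by (simp add: norm_divide divide_simps mult.commute mult.left_commute)
  qed
qed

lemma pow_add: "cmat_pow A k ** cmat_pow A p = cmat_pow A (k + p)"
  by (induction k) (simp_all add: matrix_mul_assoc[symmetric])

lemma pow_neg: "cmat_pow (- A) p $ i $ j = (-1)^p * cmat_pow A p $ i $ j"
proof (induction p arbitrary: i j)
  case 0 then show ?case by simp
next
  case (Suc p)
  show ?case by (simp add: mm_entry Suc sum_distrib_left sum_negf mult.left_commute)
qed

lemma binom_alt: "(\<Sum>k\<le>n. (-1::complex)^(n-k) / (of_nat (fact k) * of_nat (fact (n-k)))) = (if n = 0 then 1 else 0)"
proof -
  have "(\<Sum>k\<le>n. (-1::complex)^(n-k) / (of_nat (fact k) * of_nat (fact (n-k))))
      = (\<Sum>k\<le>n. of_nat (n choose k) * 1^k * (-1::complex)^(n-k)) / of_nat (fact n)"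
    by (simp add: sum_divide_distrib binomial_fact field_simps)
  also have "\<dots> = (1 + (-1::complex))^n / of_nat (fact n)" by (simp only: binomial_ring)
  finally show ?thesis by simp
qed

lemma mexp_neg: "mexp A ** mexp (- A) = mat 1"
proof -
  have "(mexp A ** mexp (- A)) $ i $ j = mat 1 $ i $ j" for i j
  proof -
    define a where "a l k = cmat_pow A k $ i $ l / of_nat (fact k)" for l k
    define b where "b l k = cmat_pow (-A) k $ l $ j / of_nat (fact k)" for l k
    have sa: "summable (\<lambda>k. norm (a l k))" for l unfolding a_def by (rule summable_entry)
    have sb: "summable (\<lambda>k. norm (b l k))" for l unfolding b_def by (rule summable_entry)
    have "(mexp A ** mexp (- A)) $ i $ j = (\<Sum>l\<in>UNIV. (\<Sum>k. a l k) * (\<Sum>k. b l k))"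
      by (simp add: mm_entry mexp_def a_def b_def)
    also have "\<dots> = (\<Sum>l\<in>UNIV. \<Sum>n. \<Sum>k\<le>n. a l k * b l (n - k))"
      by (simp add: Cauchy_product[OF sa sb])
    also have "\<dots> = (\<Sum>n. \<Sum>l\<in>UNIV. \<Sum>k\<le>n. a l k * b l (n - k))"
      by (rule suminf_sum[symmetric]) (use summable_Cauchy_product[OF sa sb] in auto)
    also have "\<dots> = (\<Sum>n. if n = 0 then mat 1 $ i $ j else 0)"
    proof (rule arg_cong[where f=suminf], rule ext)
      fix n
      have "(\<Sum>l\<in>UNIV. \<Sum>k\<le>n. a l k * b l (n - k))
          = (\<Sum>k\<le>n. \<Sum>l\<in>UNIV. (-1)^(n-k) / (of_nat (fact k) * of_nat (fact (n-k))) * (cmat_pow A k $ i $ l * cmat_pow A (n-k) $ l $ j))"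
        unfolding a_def b_def pow_neg by (subst sum.swap) (simp add: field_simps)
      also have "\<dots> = (\<Sum>k\<le>n. (-1)^(n-k) / (of_nat (fact k) * of_nat (fact (n-k))) * cmat_pow A n $ i $ j)"
      proof (intro sum.cong refl)
        fix k assume k: "k \<in> {..n}"
        have "(\<Sum>l\<in>UNIV. cmat_pow A k $ i $ l * cmat_pow A (n-k) $ l $ j) = (cmat_pow A k ** cmat_pow A (n-k)) $ i $ j"
          by (simp only: mm_entry)
        also have "\<dots> = cmat_pow A n $ i $ j" using k by (simp add: pow_add)
        finally show "(\<Sum>l\<in>UNIV. (-1)^(n-k) / (of_nat (fact k) * of_nat (fact (n-k))) * (cmat_pow A k $ i $ l * cmat_pow A (n-k) $ l $ j))
           = (-1)^(n-k) / (of_nat (fact k) * of_nat (fact (n-k))) * cmat_pow A n $ i $ j"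
          by (simp only: sum_distrib_left[symmetric])
      qed
      also have "\<dots> = (if n = 0 then 1 else 0) * cmat_pow A n $ i $ j"
        by (simp only: sum_distrib_right[symmetric] binom_alt)
      finally show "(\<Sum>l\<in>UNIV. \<Sum>k\<le>n. a l k * b l (n - k)) = (if n = 0 then mat 1 $ i $ j else 0)"
        by simp
    qed
    also have "\<dots> = mat 1 $ i $ j"
      using sums_single[of 0 "\<lambda>_. mat 1 $ i $ j"] sums_unique by metis
    finally show ?thesis .
  qed
  then show ?thesis by (simp add: vec_eq_iff)
qed

lemma cadj_entry[simp]: "cadj A $ i $ j = cnj (A $ j $ i)" by (simp add: cadj_def)

lemma cadj_mult: "cadj (A ** B) = cadj B ** cadj A"
  by (simp add: vec_eq_iff mm_entry mult.commute)

lemma cadj_mat1[simp]: "cadj (mat 1 :: 'q::finite cmat) = mat 1"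
  by (simp add: vec_eq_iff mat_def)

lemma pow_Suc_right: "cmat_pow A (Suc k) = cmat_pow A k ** A"
  using pow_add[of A k 1] by simp

lemma cadj_pow: "cadj (cmat_pow A k) = cmat_pow (cadj A) k"
  by (induction k) (simp_all add: cadj_mult, metis pow_Suc_right cmat_pow.simps(2))

lemma cnj_suminf: "summable f \<Longrightarrow> cnj (suminf f) = (\<Sum>k. cnj (f k))"
  by (metis sums_cnj summable_sums sums_unique)

lemma cadj_mexp: "cadj (mexp A) = mexp (cadj A)"
proof -
  have "cnj (\<Sum>k. cmat_pow A k $ j $ i / of_nat (fact k)) = (\<Sum>k. cmat_pow (cadj A) k $ i $ j / of_nat (fact k))" for i j
  proof -
    have "summable (\<lambda>k. cmat_pow A k $ j $ i / of_nat (fact k))"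
      by (rule summable_norm_cancel[OF summable_entry])
    then have "cnj (\<Sum>k. cmat_pow A k $ j $ i / of_nat (fact k)) = (\<Sum>k. cnj (cmat_pow A k $ j $ i / of_nat (fact k)))"
      by (rule cnj_suminf)
    also have "\<dots> = (\<Sum>k. cmat_pow (cadj A) k $ i $ j / of_nat (fact k))"
      by (simp add: cadj_pow[symmetric])
    finally show ?thesis .
  qed
  then show ?thesis by (simp add: vec_eq_iff mexp_def)
qed

definition unitary :: "'q::finite cmat \<Rightarrow> bool" where
  "unitary V \<longleftrightarrow> cadj V ** V = mat 1"

lemma unitary_mexp: assumes "cadj X = - X" shows "unitary (mexp X)"
  unfolding unitary_def cadj_mexp assms using mexp_neg[of "- X"] by simp

lemma unitary_mult: "unitary V \<Longrightarrow> unitary W \<Longrightarrow> unitary (V ** W)"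
  unfolding unitary_def cadj_mult
  by (metis matrix_mul_assoc matrix_mul_lid)

lemma unitary_mat1: "unitary (mat 1)" by (simp add: unitary_def)

lemma skew_gen: assumes "chermitian H"
  shows "cadj (cscale (- \<i> * complex_of_real t) H) = - cscale (- \<i> * complex_of_real t) H"
  using assms unfolding chermitian_def
  by (auto simp: vec_eq_iff cscale_def dest: arg_cong[where f="\<lambda>M. M $ _ $ _"])

lemma unitary_U: assumes "\<forall>j. chermitian (H j)" shows "unitary (U_circ H \<theta>)"
proof -
  have "unitary (foldr (\<lambda>j A. mexp (cscale (- \<i> * complex_of_real (\<theta> $ j)) (H j)) ** A) xs (mat 1))" for xs
  proof (induction xs)
    case Nil then show ?case by (simp add: unitary_mat1)
  next
    case (Cons a xs)
    have "unitary (mexp (cscale (- \<i> * complex_of_real (\<theta> $ a)) (H a)))"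
      by (rule unitary_mexp[OF skew_gen]) (use assms in auto)
    then show ?case using Cons by (simp add: unitary_mult del: mult_minus_left)
  qed
  then show ?thesis unfolding U_circ_def .
qed

lemma unitary_entry: assumes "unitary V" shows "norm (V $ i $ j) \<le> 1"
proof -
  have "(\<Sum>k\<in>UNIV. cnj (V $ k $ j) * V $ k $ j) = 1"
    using arg_cong[OF assms[unfolded unitary_def], of "\<lambda>M. M $ j $ j"] by (simp add: mm_entry mat_def)
  then have "(\<Sum>k\<in>UNIV. (norm (V $ k $ j))^2) = 1"
    by (metis (no_types, lifting) complex_norm_square mult.commute of_real_eq_1_iff of_real_sum sum.cong)
  moreover have "(norm (V $ i $ j))^2 \<le> (\<Sum>k\<in>UNIV. (norm (V $ k $ j))^2)"
    by (rule member_le_sum) auto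
  ultimately show ?thesis by (simp add: power_le_one_iff abs_le_square_iff)
qed

lemma l1_unitary: fixes V :: "'q::finite cmat" assumes "unitary V" shows "l1 V \<le> real CARD('q) * real CARD('q)"
proof -
  have "l1 V \<le> (\<Sum>i\<in>(UNIV::'q set). \<Sum>j\<in>(UNIV::'q set). 1)"
    unfolding l1_def by (intro sum_mono unitary_entry assms)
  then show ?thesis by simp
qed

lemma l1_cadj: "l1 (cadj A) = l1 A"
  unfolding l1_def cadj_entry complex_mod_cnj by (rule sum.swap)

lemma trace_le_l1: "norm (ctrace A) \<le> l1 A"
  unfolding ctrace_def l1_def by (intro order_trans[OF norm_sum] sum_mono member_le_sum) auto

lemma C_bounded:
  fixes H :: "'m::{finite,linorder} \<Rightarrow> 'q::finite cmat"
  assumes "\<forall>j. chermitian (H j)"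
  shows "\<bar>C_uni \<rho>0 Obs H \<theta>\<bar> \<le> l1 Obs * (real CARD('q) * real CARD('q)) * l1 \<rho>0 * (real CARD('q) * real CARD('q))"
proof -
  let ?U = "U_circ H \<theta>"
  let ?c = "real CARD('q) * real CARD('q)"
  have u: "l1 ?U \<le> ?c" "l1 (cadj ?U) \<le> ?c" using l1_unitary[OF unitary_U[OF assms]] l1_cadj by metis+
  have "\<bar>C_uni \<rho>0 Obs H \<theta>\<bar> \<le> norm (ctrace (Obs ** ?U ** \<rho>0 ** cadj ?U))"
    unfolding C_uni_def by (rule abs_Re_le_cmod)
  also have "\<dots> \<le> l1 (Obs ** ?U ** \<rho>0 ** cadj ?U)" by (rule trace_le_l1)
  also have "\<dots> \<le> l1 Obs * l1 ?U * l1 \<rho>0 * l1 (cadj ?U)"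
    by (meson l1_mult l1_nonneg mult_right_mono order_trans)
  also have "\<dots> \<le> l1 Obs * ?c * l1 \<rho>0 * ?c"
    by (intro mult_mono u l1_nonneg mult_nonneg_nonneg) auto
  finally show ?thesis .
qed



lemma grad_has_deriv:
  fixes f :: "real^'m \<Rightarrow> real"
  assumes "f differentiable (at x)"
  shows "(f has_derivative (\<lambda>h. grad f x \<bullet> h)) (at x)"
proof -
  obtain D where D: "(f has_derivative D) (at x)" using assms differentiable_def by blast
  have lin: "linear D" using D by (rule has_derivative_linear)
  define g where "g = adjoint D 1"
  have Dg: "D = (\<lambda>h. g \<bullet> h)"
  proof (rule ext)
    fix h
    have "D h = D h \<bullet> 1" by simp
    also have "\<dots> = h \<bullet> adjoint D 1" by (rule adjoint_works[OF lin, symmetric])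
    also have "\<dots> = g \<bullet> h" by (simp only: g_def inner_commute)
    finally show "D h = g \<bullet> h" .
  qed
  have ex: "(f has_derivative (\<lambda>h. g \<bullet> h)) (at x)" using D unfolding Dg .
  have uniq: "g' = g" if "(f has_derivative (\<lambda>h. g' \<bullet> h)) (at x)" for g'
  proof -
    have "(\<lambda>h. g' \<bullet> h) = (\<lambda>h. g \<bullet> h)" by (rule has_derivative_unique[OF that ex])
    then have "g' \<bullet> (g' - g) = g \<bullet> (g' - g)" by simp
    then have "(g' - g) \<bullet> (g' - g) = 0" by (simp add: inner_diff_left)
    then show ?thesis by simp
  qed
  have gg: "grad f x = g" unfolding grad_def
    by (rule the_equality[where P="\<lambda>g. (f has_derivative (\<lambda>h. g \<bullet> h)) (at x)"], rule ex, rule uniq, assumption)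
  show ?thesis unfolding gg by (rule ex)
qed

lemma taylor_bound:
  fixes f :: "real^'m \<Rightarrow> real"
  assumes D: "\<forall>x. f differentiable (at x)"
    and L: "\<forall>x y. norm (grad f x - grad f y) \<le> \<beta> * norm (x - y)"
  shows "\<bar>f (x + d) - f x - grad f x \<bullet> d\<bar> \<le> \<beta> / 2 * (norm d)\<^sup>2"
proof -
  define \<phi> where "\<phi> s = f (x + s *\<^sub>R d)" for s
  define \<phi>' where "\<phi>' s = grad f (x + s *\<^sub>R d) \<bullet> d" for s
  define c where "c = grad f x \<bullet> d"
  define n2 where "n2 = (norm d)\<^sup>2"
  have d\<phi>: "(\<phi> has_real_derivative \<phi>' s) (at s)" for s
  proof -
    have h1: "((\<lambda>s. x + s *\<^sub>R d) has_derivative (\<lambda>h. h *\<^sub>R d)) (at s)"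
      by (auto intro!: derivative_eq_intros)
    have h2: "((\<lambda>s. f (x + s *\<^sub>R d)) has_derivative (\<lambda>h. grad f (x + s *\<^sub>R d) \<bullet> (h *\<^sub>R d))) (at s)"
      by (rule has_derivative_compose[OF h1 grad_has_deriv[OF D[rule_format]]])
    have e1: "(\<lambda>h. grad f (x + s *\<^sub>R d) \<bullet> (h *\<^sub>R d)) = (*) (\<phi>' s)"
      by (rule ext) (simp only: \<phi>'_def inner_scaleR_right mult.commute)
    have e2: "\<phi> = (\<lambda>s. f (x + s *\<^sub>R d))" by (rule ext) (simp only: \<phi>_def)
    show ?thesis unfolding has_field_derivative_def e2 using h2 unfolding e1 .
  qed
  have bnd: "\<bar>\<phi>' s - c\<bar> \<le> \<beta> * s * n2" if "0 \<le> s" for s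
  proof -
    have "\<bar>\<phi>' s - c\<bar> = \<bar>(grad f (x + s *\<^sub>R d) - grad f x) \<bullet> d\<bar>"
      by (simp add: \<phi>'_def c_def inner_diff_left)
    also have "\<dots> \<le> norm (grad f (x + s *\<^sub>R d) - grad f x) * norm d"
      by (rule Cauchy_Schwarz_ineq2)
    also have "\<dots> \<le> \<beta> * norm (s *\<^sub>R d) * norm d"
      using L[rule_format, of "x + s *\<^sub>R d" x] by (intro mult_right_mono) auto
    also have "\<dots> = \<beta> * s * n2" using that by (simp add: n2_def power2_eq_square)
    finally show ?thesis .
  qed
  have up: "\<phi> 1 - c - \<beta>/2 * n2 \<le> \<phi> 0"
  proof -
    have "(\<lambda>s. \<phi> s - s * c - \<beta>/2 * s^2 * n2) 1 \<le> (\<lambda>s. \<phi> s - s * c - \<beta>/2 * s^2 * n2) 0"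
    proof (rule DERIV_nonpos_imp_nonincreasing[of 0 1])
      fix s :: real assume s: "0 \<le> s" "s \<le> 1"
      have "((\<lambda>s. \<phi> s - s * c - \<beta>/2 * s^2 * n2) has_real_derivative (\<phi>' s - c - \<beta> * s * n2)) (at s)"
        by (auto intro!: derivative_eq_intros d\<phi>)
      then show "\<exists>y. ((\<lambda>s. \<phi> s - s * c - \<beta>/2 * s^2 * n2) has_real_derivative y) (at s) \<and> y \<le> 0"
        using bnd[of s] s by auto
    qed simp
    then show ?thesis by simp
  qed
  have lo: "\<phi> 0 \<le> \<phi> 1 - c + \<beta>/2 * n2"
  proof -
    have "(\<lambda>s. \<phi> s - s * c + \<beta>/2 * s^2 * n2) 0 \<le> (\<lambda>s. \<phi> s - s * c + \<beta>/2 * s^2 * n2) 1"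
    proof (rule DERIV_nonneg_imp_nondecreasing[of 0 1])
      fix s :: real assume s: "0 \<le> s" "s \<le> 1"
      have "((\<lambda>s. \<phi> s - s * c + \<beta>/2 * s^2 * n2) has_real_derivative (\<phi>' s - c + \<beta> * s * n2)) (at s)"
        by (auto intro!: derivative_eq_intros d\<phi>)
      then show "\<exists>y. ((\<lambda>s. \<phi> s - s * c + \<beta>/2 * s^2 * n2) has_real_derivative y) (at s) \<and> y \<ge> 0"
        using bnd[of s] s by auto
    qed simp
    then show ?thesis by simp
  qed
  have p1: "\<phi> 1 = f (x + d)" and p0: "\<phi> 0 = f x" by (simp_all add: \<phi>_def)
  show ?thesis unfolding c_def[symmetric] n2_def[symmetric] abs_le_iff using up lo p1 p0 by linarith
qed

lemma main_abstract:
  fixes f :: "real^'m \<Rightarrow> real" and M :: "(real, 'm) vec measure"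
  assumes D: "\<forall>x. f differentiable (at x)"
    and L: "\<forall>x y. norm (grad f x - grad f y) \<le> \<beta> * norm (x - y)"
    and step: "0 < \<eta>" "\<eta> \<le> 1 / \<beta>"
    and K: "\<forall>x. \<bar>f x\<bar> \<le> K"
    and init: "prob_space M" "sets M = sets borel"
    and Gpos: "G > 0"
    and flat: "\<forall>t. (\<forall>s\<le>t. (\<integral>\<theta>0. f (gd_iter f \<eta> \<theta>0 s) - (INF \<theta>. f \<theta>) \<partial>M) > \<epsilon>)
               \<longrightarrow> (\<integral>\<theta>0. (norm (grad f (gd_iter f \<eta> \<theta>0 t)))\<^sup>2 \<partial>M) \<le> G"
    and gap0: "(\<integral>\<theta>0. f (gd_iter f \<eta> \<theta>0 0) - (INF \<theta>. f \<theta>) \<partial>M) \<ge> \<delta>0"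
    and gapT: "(\<integral>\<theta>0. f (gd_iter f \<eta> \<theta>0 T) - (INF \<theta>. f \<theta>) \<partial>M) \<le> \<epsilon>"
    and eps_lt: "\<epsilon> < \<delta>0"
  shows "real T \<ge> 2 * (\<delta>0 - \<epsilon>) / (3 * \<eta> * G)"
proof -
  interpret prob_space M by (rule init(1))
  have "0 < 1 / \<beta>" using step by linarith
  then have bpos: "\<beta> > 0" by simp
  have beta_eta: "\<beta> * \<eta> \<le> 1" using step bpos by (simp add: field_simps)
  define P where "P \<theta> = \<theta> - \<eta> *\<^sub>R grad f \<theta>" for \<theta>
  define th where "th k \<theta>0 = gd_iter f \<eta> \<theta>0 k" for k \<theta>0
  define c where "c = (INF \<theta>. f \<theta>)"
  define Del where "Del k = (\<integral>\<theta>0. f (th k \<theta>0) - c \<partial>M)" for k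
  define E where "E k = (\<integral>\<theta>0. (norm (grad f (th k \<theta>0)))\<^sup>2 \<partial>M)" for k
  have thSuc: "th (Suc k) \<theta>0 = P (th k \<theta>0)" for k \<theta>0
    by (simp add: th_def gd_iter_def P_def)
  have cg: "continuous_on UNIV (grad f)"
  proof (rule lipschitz_on_continuous_on)
    show "\<beta>-lipschitz_on UNIV (grad f)"
      using L bpos by (intro lipschitz_onI) (auto simp: dist_norm)
  qed
  have cf: "continuous_on UNIV f"
    using D by (meson continuous_at_imp_continuous_on differentiable_imp_continuous_within)
  have cP: "continuous_on UNIV P" unfolding P_def by (intro continuous_intros cg)
  have cth: "continuous_on UNIV (th k)" for k
  proof (induction k)
    case 0 then show ?case by (simp add: th_def gd_iter_def continuous_on_id)
  next
    case (Suc k)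
    have "th (Suc k) = P \<circ> th k" by (simp add: fun_eq_iff thSuc)
    then show ?case using continuous_on_compose[OF Suc continuous_on_subset[OF cP]] by auto
  qed
  have meas: "h \<in> borel_measurable M" if "continuous_on UNIV h" for h :: "real^'m \<Rightarrow> real"
    using borel_measurable_continuous_onI[OF that] measurable_cong_sets[OF init(2) refl] by blast
  have gbound: "(norm (grad f x))\<^sup>2 \<le> 4 * \<beta> * K" for x
  proof -
    define gx where "gx = grad f x"
    define dd where "dd = - (1/\<beta>) *\<^sub>R gx"
    define N where "N = (norm gx)\<^sup>2"
    have t: "\<bar>f (x + dd) - f x - grad f x \<bullet> dd\<bar> \<le> \<beta> / 2 * (norm dd)\<^sup>2"
      by (rule taylor_bound[OF D L])
    have a: "grad f x \<bullet> dd = - (2 * (N / (2*\<beta>)))"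
      using bpos by (simp add: dd_def gx_def N_def power2_norm_eq_inner)
    have b: "\<beta> / 2 * (norm dd)\<^sup>2 = N / (2*\<beta>)"
      using bpos by (simp add: dd_def N_def power2_eq_square field_simps)
    have c1: "f (x + dd) - f x - grad f x \<bullet> dd \<le> \<beta> / 2 * (norm dd)\<^sup>2" using t by (rule abs_le_D1)
    have k1: "\<bar>f (x + dd)\<bar> \<le> K" "\<bar>f x\<bar> \<le> K" using K by auto
    have "N / (2*\<beta>) \<le> 2 * K" using c1 a b k1 by linarith
    then have "2*\<beta> * (N / (2*\<beta>)) \<le> 2*\<beta> * (2 * K)" using bpos by (intro mult_left_mono) auto
    then show ?thesis using bpos by (simp add: N_def gx_def)
  qed
  have descent: "f x - f (P x) \<le> 3/2 * \<eta> * (norm (grad f x))\<^sup>2" for x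
  proof -
    define dd where "dd = - \<eta> *\<^sub>R grad f x"
    define N where "N = (norm (grad f x))\<^sup>2"
    have t: "\<bar>f (x + dd) - f x - grad f x \<bullet> dd\<bar> \<le> \<beta> / 2 * (norm dd)\<^sup>2"
      by (rule taylor_bound[OF D L])
    have c1: "f x - f (x + dd) + grad f x \<bullet> dd \<le> \<beta> / 2 * (norm dd)\<^sup>2"
      using t by (simp only: abs_le_iff) linarith
    have a: "grad f x \<bullet> dd = - (\<eta> * N)"
      by (simp add: dd_def N_def power2_norm_eq_inner)
    have b: "\<beta> / 2 * (norm dd)\<^sup>2 = (\<beta> * \<eta>) * (\<eta> * N) / 2"
      using step by (simp add: dd_def N_def power2_eq_square field_simps)
    have c: "(\<beta> * \<eta>) * (\<eta> * N) \<le> 1 * (\<eta> * N)"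
      using beta_eta step by (intro mult_right_mono) (auto simp: N_def)
    have e: "x + dd = P x" by (simp add: dd_def P_def)
    show ?thesis using c1 a b c unfolding e N_def[symmetric] by linarith
  qed
  have intf: "integrable M (\<lambda>\<theta>0. f (th k \<theta>0))" for k
    by (rule integrable_const_bound[where B=K]) (use K in \<open>auto intro!: meas continuous_on_compose2[OF cf cth]\<close>)
  have intg: "integrable M (\<lambda>\<theta>0. (norm (grad f (th k \<theta>0)))\<^sup>2)" for k
    by (rule integrable_const_bound[where B="4 * \<beta> * K"])
      (use gbound in \<open>auto intro!: meas continuous_intros continuous_on_compose2[OF cg cth]\<close>)
  have stepD: "Del k - Del (Suc k) \<le> 3/2 * \<eta> * E k" for k
  proof -
    have "Del k - Del (Suc k) = (\<integral>\<theta>0. (f (th k \<theta>0) - c) - (f (th (Suc k) \<theta>0) - c) \<partial>M)"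
      unfolding Del_def by (rule Bochner_Integration.integral_diff[symmetric]) (auto intro: intf)
    also have "\<dots> = (\<integral>\<theta>0. f (th k \<theta>0) - f (P (th k \<theta>0)) \<partial>M)" by (simp add: thSuc)
    also have "\<dots> \<le> (\<integral>\<theta>0. 3/2 * \<eta> * (norm (grad f (th k \<theta>0)))\<^sup>2 \<partial>M)"
    proof (rule Bochner_Integration.integral_mono)
      show "integrable M (\<lambda>\<theta>0. f (th k \<theta>0) - f (P (th k \<theta>0)))"
        unfolding thSuc[symmetric] by (intro Bochner_Integration.integrable_diff intf)
      show "integrable M (\<lambda>\<theta>0. 3/2 * \<eta> * (norm (grad f (th k \<theta>0)))\<^sup>2)"
        by (intro integrable_mult_right intg)
      show "f (th k \<theta>0) - f (P (th k \<theta>0)) \<le> 3/2 * \<eta> * (norm (grad f (th k \<theta>0)))\<^sup>2" for \<theta>0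
        by (rule descent)
    qed
    also have "\<dots> = 3/2 * \<eta> * E k" unfolding E_def by simp
    finally show ?thesis .
  qed
  have exT: "\<exists>t. Del t \<le> \<epsilon>" using gapT by (auto simp: Del_def th_def c_def)
  define T0 where "T0 = (LEAST t. Del t \<le> \<epsilon>)"
  have T0le: "T0 \<le> T" unfolding T0_def by (rule Least_le) (use gapT in \<open>simp add: Del_def th_def c_def\<close>)
  have DT0: "Del T0 \<le> \<epsilon>" unfolding T0_def by (rule LeastI_ex[OF exT])
  have before: "Del s > \<epsilon>" if "s < T0" for s
    using not_less_Least[OF that[unfolded T0_def]] by simp
  have Ek: "E k \<le> G" if "k < T0" for k
  proof -
    have "\<forall>s\<le>k. (\<integral>\<theta>0. f (gd_iter f \<eta> \<theta>0 s) - (INF \<theta>. f \<theta>) \<partial>M) > \<epsilon>"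
      using before that by (auto simp: Del_def th_def c_def)
    then show ?thesis using flat by (auto simp: E_def th_def)
  qed
  have acc: "k \<le> T0 \<Longrightarrow> Del 0 - Del k \<le> 3/2 * \<eta> * real k * G" for k
  proof (induction k)
    case 0 then show ?case by simp
  next
    case (Suc k)
    have "Del k - Del (Suc k) \<le> 3/2 * \<eta> * G"
    proof -
      have "E k \<le> G" using Ek[of k] Suc.prems by simp
      then have "3/2 * \<eta> * E k \<le> 3/2 * \<eta> * G" using step by (intro mult_left_mono) auto
      then show ?thesis using stepD[of k] by linarith
    qed
    then show ?case using Suc by (simp add: algebra_simps)
  qed
  have "\<delta>0 - \<epsilon> \<le> 3/2 * \<eta> * real T0 * G"
    using acc[OF order_refl] DT0 gap0 by (simp add: Del_def th_def c_def)
  also have "\<dots> \<le> 3/2 * \<eta> * real T * G"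
    using T0le step Gpos by (intro mult_right_mono mult_left_mono) auto
  finally have "\<delta>0 - \<epsilon> \<le> 3/2 * \<eta> * real T * G" .
  then show ?thesis using step Gpos by (simp add: field_simps)
qed

theorem lemma4:
  fixes n m :: nat
    and \<rho>0 Obs :: "complex^'q::finite^'q"
    and H :: "'m::{finite,linorder} \<Rightarrow> complex^'q^'q"
    and M :: "(real, 'm) vec measure"
    and \<beta> \<eta> B b \<delta>0 \<epsilon> :: real
    and T :: nat
  assumes n_pos: "n \<ge> 1"
    and qubits: "CARD('q) = 2 ^ n"
    and m_def: "CARD('m) = m"
    and state: "density \<rho>0"
    and obs: "chermitian Obs"
    and gens: "\<forall>j. chermitian (H j)"
    and init: "prob_space M" "sets M = sets borel"
    and smooth_diff: "\<forall>\<theta>. C_uni \<rho>0 Obs H differentiable (at \<theta>)"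
    and smooth_lip: "\<forall>\<theta> \<phi>. norm (grad (C_uni \<rho>0 Obs H) \<theta> - grad (C_uni \<rho>0 Obs H) \<phi>) \<le> \<beta> * norm (\<theta> - \<phi>)"
    and step: "0 < \<eta>" "\<eta> \<le> 1 / \<beta>"
    and Bb: "B > 0" "b > 1"
    and flat: "\<forall>t. (\<forall>s\<le>t. (\<integral>\<theta>0. C_uni \<rho>0 Obs H (gd_iter (C_uni \<rho>0 Obs H) \<eta> \<theta>0 s)
                                    - (INF \<theta>. C_uni \<rho>0 Obs H \<theta>) \<partial>M) > \<epsilon>)
               \<longrightarrow> (\<integral>\<theta>0. (norm (grad (C_uni \<rho>0 Obs H) (gd_iter (C_uni \<rho>0 Obs H) \<eta> \<theta>0 t)))\<^sup>2 \<partial>M)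
                   \<le> real m * B / b ^ n"
    and gap0: "(\<integral>\<theta>0. C_uni \<rho>0 Obs H (gd_iter (C_uni \<rho>0 Obs H) \<eta> \<theta>0 0)
                                    - (INF \<theta>. C_uni \<rho>0 Obs H \<theta>) \<partial>M) \<ge> \<delta>0"
    and delta_pos: "\<delta>0 > 0"
    and gapT: "(\<integral>\<theta>0. C_uni \<rho>0 Obs H (gd_iter (C_uni \<rho>0 Obs H) \<eta> \<theta>0 T)
                                    - (INF \<theta>. C_uni \<rho>0 Obs H \<theta>) \<partial>M) \<le> \<epsilon>"
    and eps_lt: "\<epsilon> < \<delta>0"
  shows "real T \<ge> 2 * (\<delta>0 - \<epsilon>) / (3 * \<eta> * (real m * B / b ^ n))"
  proof -
  have "0 < CARD('m)" by simp
  then have mpos: "0 < real m" using m_def by simp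
  have Gpos: "real m * B / b ^ n > 0" using mpos Bb by simp
  show ?thesis
    by (rule main_abstract[OF smooth_diff smooth_lip step allI[OF C_bounded[OF gens]] init Gpos flat gap0 gapT eps_lt])
qed

end
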